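(* Consider a source $S$, a destination $D$, two relays $R_1,R_2$, independent Rayleigh link amplitude processes $a_{AB}(t)$ with $E[a_{AB}^2]=\Omega_{AB}>0$ and maximum Doppler frequencies $\mathcal{F}_{AB}>0$ for $AB\in\{SR_1,R_1D,SR_2,R_2D\}$, and let $a_i(t)=\min(a_{SR_i}(t),a_{R_iD}(t))$, $\Omega_i=\Omega_{SR_i}\Omega_{R_iD}/(\Omega_{SR_i}+\Omega_{R_iD})$. Let $\Gamma>0$ be the common transmit SNR and $T>0$ the switching threshold, and operate the DSSC-B protocol described in the context. Put \[ c_i=\sqrt{\tfrac{T}{\Gamma\Omega_{SR_i}}}\,\mathcal{F}_{SR_i}+\sqrt{\tfrac{T}{\Gamma\Omega_{R_iD}}}\,\mathcal{F}_{R_iD},\quad i\in\{1,2\},\qquad E=e^{-\frac{T(\Omega_1+\Omega_2)}{\Gamma\Omega_1\Omega_2}}, \] \[ \Delta=2e^{\frac{T}{\Gamma\Omega_1}}-e^{\frac{2T}{\Gamma\Omega_1}}+2e^{\frac{T}{\Gamma\Omega_2}}-e^{\frac{2T}{\Gamma\Omega_2}}-2e^{\frac{T(\Omega_1+\Omega_2)}{\Gamma\Omega_1\Omega_2}}+e^{\frac{T(\Omega_1+2\Omega_2)}{\Gamma\Omega_1\Omega_2}}+e^{\frac{T(2\Omega_1+\Omega_2)}{\Gamma\Omega_1\Omega_2}}-2. \] Then the relay switching rate of DSSC-B is \[ SR_{DSSC}(T)=\frac{\sqrt{2\pi}}{\Delta}\Big[E\big(e^{\frac{2T}{\Gamma\Omega_2}}-e^{\frac{T}{\Gamma\Omega_2}}\big)c_1+E\big(e^{\frac{2T}{\Gamma\Omega_1}}-e^{\frac{T}{\Gamma\Omega_1}}\big)c_2+(c_1+c_2)\big(e^{\frac{T}{\Gamma\Omega_1}}-1\big)\big(e^{\frac{T}{\Gamma\Omega_2}}-1\big)\Big].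 \]
   Context: Fading model: each link amplitude $a_{AB}(t)$ is Rayleigh with density $\frac{2x}{\Omega_{AB}}e^{-x^2/\Omega_{AB}}$; its time derivative is, at each time, zero-mean Gaussian with standard deviation $\pi\mathcal{F}_{AB}\sqrt{\Omega_{AB}}$ and independent of $a_{AB}(t)$; links are independent. DSSC-B protocol (distributed switch-and-stay, variant B): one relay $R_b$ is active at a time; with $a_i^j$ the value of $a_i$ in transmission period $j$, if $R_b^j=R_1$ then $R_b^{j+1}=R_2$ exactly when $a_1^{j-1}>\sqrt{T/\Gamma}$ and $a_1^j<\sqrt{T/\Gamma}$, and otherwise $R_b^{j+1}=R_1$; symmetrically with the roles of $R_1,R_2$ exchanged. Equivalently, a switch to the other relay occurs exactly when the active branch's $a_b(t)$ crosses the level $\sqrt{T/\Gamma}$ in the downward direction; after a switch the system stays with the new relay regardless of its level until that relay's $a_b$ down-crosses $\sqrt{T/\Gamma}$. The relay switching rate is the expected number of relay switchings per second. *)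

theory Defs
  imports "HOL-Probability.Probability"
begin

text \<open>Relays and hops. A link AB is identified by a relay i and a hop (S to R_i, or R_i to D).\<close>
datatype relay = R1 | R2
datatype hop = SR | RD

fun other :: "relay \<Rightarrow> relay" where
  "other R1 = R2" | "other R2 = R1"

lemma UNIV_relay: "(UNIV :: relay set) = {R1, R2}"
  using relay.exhaust by auto

instance relay :: finite
  by standard (simp add: UNIV_relay)

definition rayleigh_density :: "real \<Rightarrow> real \<Rightarrow> real" where
  "rayleigh_density \<Omega> x = (if 0 \<le> x then 2 * x / \<Omega> * exp (- x\<^sup>2 / \<Omega>) else 0)"

text \<open>Joint law of (a_AB(t), a_AB'(t)) at a fixed time t: Rayleigh amplitude, independent
  zero-mean Gaussian derivative with standard deviation pi * F * sqrt Omega.\<close>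
definition link_law :: "real \<Rightarrow> real \<Rightarrow> (real \<times> real) measure" where
  "link_law \<Omega> F = density lborel (rayleigh_density \<Omega>)
      \<Otimes>\<^sub>M density lborel (normal_density 0 (pi * F * sqrt \<Omega>))"

text \<open>Joint law of (a_i(t), a_i'(t)) where a_i = min(a_SRi, a_RiD) (independent links);
  the derivative of the minimum is the derivative of the currently smaller branch.\<close>
definition relay_law :: "(relay \<Rightarrow> hop \<Rightarrow> real) \<Rightarrow> (relay \<Rightarrow> hop \<Rightarrow> real) \<Rightarrow> relay
    \<Rightarrow> (real \<times> real) measure" where
  "relay_law \<Omega> F i =
     distr (link_law (\<Omega> i SR) (F i SR) \<Otimes>\<^sub>M link_law (\<Omega> i RD) (F i RD)) borel
       (\<lambda>((x1, y1), (x2, y2)). (min x1 x2, if x1 \<le> x2 then y1 else y2))"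

text \<open>Level crossing rate (expected number of downward crossings of level r per second),
  Rice's formula: the derivative in r of E[ max(0, -a'(t)) ; a(t) \<le> r ].\<close>
definition down_lcr :: "(real \<times> real) measure \<Rightarrow> real \<Rightarrow> real" where
  "down_lcr L r = deriv (\<lambda>s. \<integral>p. indicator {..s} (fst p) * max 0 (- snd p) \<partial>L) r"

definition above_prob :: "(relay \<Rightarrow> hop \<Rightarrow> real) \<Rightarrow> (relay \<Rightarrow> hop \<Rightarrow> real) \<Rightarrow> real
    \<Rightarrow> relay \<Rightarrow> real" where
  "above_prob \<Omega> F th i = measure (relay_law \<Omega> F i) {p. fst p > th}"

text \<open>DSSC-B decision rule: with active relay b, previous-period indicator s = [a_b^(j-1) > th]
  and current indicator s' = [a_b^j > th], the next active relay.\<close>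
definition dssc_next :: "relay \<Rightarrow> bool \<Rightarrow> bool \<Rightarrow> relay" where
  "dssc_next b s s' = (if s \<and> \<not> s' then other b else b)"

text \<open>State (b, s1, s2): b = R_b^(j+1) (relay active in
  the next period) and s_k = [a_k^j > th]; samples in different periods and of different relays
  are independent.\<close>
type_synonym dssc_state = "relay \<times> bool \<times> bool"

definition bern :: "real \<Rightarrow> bool \<Rightarrow> real" where
  "bern q s = (if s then q else 1 - q)"

definition ind :: "relay \<Rightarrow> bool \<times> bool \<Rightarrow> bool" where
  "ind b s = (case b of R1 \<Rightarrow> fst s | R2 \<Rightarrow> snd s)"

definition dssc_trans :: "(relay \<Rightarrow> real) \<Rightarrow> dssc_state \<Rightarrow> dssc_state \<Rightarrow> real" where
  "dssc_trans q x y =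
     (let (b, s) = x; (b', s') = y in
        bern (q R1) (fst s') * bern (q R2) (snd s') *
        (if b' = dssc_next b (ind b s) (ind b s') then 1 else 0))"

definition dssc_stationary ::
  "(relay \<Rightarrow> hop \<Rightarrow> real) \<Rightarrow> (relay \<Rightarrow> hop \<Rightarrow> real) \<Rightarrow> real \<Rightarrow> real \<Rightarrow> (dssc_state \<Rightarrow> real) \<Rightarrow> bool" where
  "dssc_stationary \<Omega> F \<Gamma> T \<pi> \<longleftrightarrow>
     (\<forall>x. 0 \<le> \<pi> x) \<and> (\<Sum>x\<in>UNIV. \<pi> x) = 1 \<and>
     (\<forall>y. \<pi> y = (\<Sum>x\<in>UNIV. \<pi> x * dssc_trans (above_prob \<Omega> F (sqrt (T / \<Gamma>))) x y))"

text \<open>Relay switching rate: switches occur exactly at down-crossings of sqrt(T/Gamma) by the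
  active branch, so the rate is sum over b of P(R_b active) times the down-crossing rate of a_b.\<close>
definition dssc_switching_rate ::
  "(relay \<Rightarrow> hop \<Rightarrow> real) \<Rightarrow> (relay \<Rightarrow> hop \<Rightarrow> real) \<Rightarrow> real \<Rightarrow> real \<Rightarrow> (dssc_state \<Rightarrow> real) \<Rightarrow> real" where
  "dssc_switching_rate \<Omega> F \<Gamma> T \<pi> =
     (\<Sum>b\<in>UNIV. (\<Sum>s\<in>UNIV. \<pi> (b, s)) * down_lcr (relay_law \<Omega> F b) (sqrt (T / \<Gamma>)))"

end

theory Submission
  imports Defs "HOL-Real_Asymp.Real_Asymp"
begin


lemma rayleigh_nonneg: "\<Omega> > 0 \<Longrightarrow> 0 \<le> rayleigh_density \<Omega> x"
  by (simp add: rayleigh_density_def)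

lemma rayleigh_borel[measurable]: "rayleigh_density \<Omega> \<in> borel_measurable borel"
  unfolding rayleigh_density_def by measurable

lemma rayleigh_tail:
  assumes "\<Omega> > 0" "a \<ge> 0"
  shows "(\<integral>\<^sup>+x. ennreal (rayleigh_density \<Omega> x) * indicator {a..} x \<partial>lborel) = ennreal (exp (- a\<^sup>2 / \<Omega>))"
proof -
  have "(\<integral>\<^sup>+x. ennreal (rayleigh_density \<Omega> x) * indicator {a..} x \<partial>lborel) = 0 - (- exp (- a\<^sup>2 / \<Omega>))"
  proof (rule nn_integral_FTC_atLeast)
    fix x assume x: "a \<le> x"
    show "DERIV (\<lambda>x. - exp (- x\<^sup>2 / \<Omega>)) x :> rayleigh_density \<Omega> x"
      using x assms unfolding rayleigh_density_def
      by (auto intro!: derivative_eq_intros simp: field_simps power2_eq_square)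
    show "0 \<le> rayleigh_density \<Omega> x" using assms by (simp add: rayleigh_nonneg)
  next
    show "((\<lambda>x. - exp (- x\<^sup>2 / \<Omega>)) \<longlongrightarrow> 0) at_top" using assms by real_asymp
  qed simp
  then show ?thesis by simp
qed

lemma rayleigh_tail_strict:
  assumes "\<Omega> > 0" "a \<ge> 0"
  shows "(\<integral>\<^sup>+x. ennreal (rayleigh_density \<Omega> x) * indicator {a<..} x \<partial>lborel) = ennreal (exp (- a\<^sup>2 / \<Omega>))"
proof -
  have "(\<integral>\<^sup>+x. ennreal (rayleigh_density \<Omega> x) * indicator {a<..} x \<partial>lborel) =
        (\<integral>\<^sup>+x. ennreal (rayleigh_density \<Omega> x) * indicator {a..} x \<partial>lborel)"
    by (rule nn_integral_cong_AE) (use AE_lborel_singleton[of a] in \<open>auto elim!: eventually_mono split: split_indicator\<close>)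
  then show ?thesis using rayleigh_tail[OF assms] by simp
qed

lemma rayleigh_total:
  assumes "\<Omega> > 0"
  shows "(\<integral>\<^sup>+x. ennreal (rayleigh_density \<Omega> x) \<partial>lborel) = 1"
proof -
  have "(\<integral>\<^sup>+x. ennreal (rayleigh_density \<Omega> x) \<partial>lborel) =
        (\<integral>\<^sup>+x. ennreal (rayleigh_density \<Omega> x) * indicator {0..} x \<partial>lborel)"
    by (rule nn_integral_cong) (auto simp: rayleigh_density_def split: split_indicator)
  then show ?thesis using rayleigh_tail[OF assms, of 0] by simp
qed

lemma rayleigh_weighted:
  assumes A: "\<Omega>A > 0" and B: "\<Omega>B > 0" and s: "s \<ge> 0"
  defines "Oc \<equiv> \<Omega>A * \<Omega>B / (\<Omega>A + \<Omega>B)"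
  shows "(\<integral>\<^sup>+x. ennreal (rayleigh_density \<Omega>A x) * ennreal (exp (- x\<^sup>2 / \<Omega>B)) * indicator {..s} x \<partial>lborel)
       = ennreal (Oc / \<Omega>A * (1 - exp (- s\<^sup>2 / Oc)))"
proof -
  have Oc: "Oc > 0" using A B by (simp add: Oc_def)
  let ?f = "\<lambda>x. 2 * x / \<Omega>A * exp (- x\<^sup>2 / Oc)"
  have eqf: "- x\<^sup>2 / \<Omega>A + - x\<^sup>2 / \<Omega>B = - x\<^sup>2 / Oc" for x
    using A B by (simp add: Oc_def field_simps)
  have "(\<integral>\<^sup>+x. ennreal (rayleigh_density \<Omega>A x) * ennreal (exp (- x\<^sup>2 / \<Omega>B)) * indicator {..s} x \<partial>lborel)
      = (\<integral>\<^sup>+x. ennreal (?f x) * indicator {0..s} x \<partial>lborel)"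
  proof (rule nn_integral_cong)
    fix x :: real
    show "ennreal (rayleigh_density \<Omega>A x) * ennreal (exp (- x\<^sup>2 / \<Omega>B)) * indicator {..s} x =
          ennreal (?f x) * indicator {0..s} x"
      using A B eqf[of x]
      by (auto simp: rayleigh_density_def ennreal_mult'[symmetric] exp_add[symmetric] split: split_indicator)
  qed
  also have "\<dots> = ennreal ((- Oc / \<Omega>A * exp (- s\<^sup>2 / Oc)) - (- Oc / \<Omega>A * exp (- 0\<^sup>2 / Oc)))"
  proof (rule nn_integral_has_integral_lebesgue')
    show "\<And>x. x \<in> {0..s} \<Longrightarrow> 0 \<le> ?f x" using A by auto
    show "(?f has_integral (- Oc / \<Omega>A * exp (- s\<^sup>2 / Oc) - - Oc / \<Omega>A * exp (- 0\<^sup>2 / Oc))) {0..s}"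
    proof (rule fundamental_theorem_of_calculus[OF s])
      fix x assume "x \<in> {0..s}"
      show "((\<lambda>x. - Oc / \<Omega>A * exp (- x\<^sup>2 / Oc)) has_vector_derivative ?f x) (at x within {0..s})"
        unfolding has_real_derivative_iff_has_vector_derivative[symmetric]
        using Oc A by (auto intro!: derivative_eq_intros simp: field_simps power2_eq_square)
    qed
  qed
  also have "\<dots> = ennreal (Oc / \<Omega>A * (1 - exp (- s\<^sup>2 / Oc)))"
    by (simp add: algebra_simps)
  finally show ?thesis .
qed



lemma normal_total:
  assumes "\<sigma> > 0"
  shows "(\<integral>\<^sup>+y. ennreal (normal_density 0 \<sigma> y) \<partial>lborel) = 1"
proof -
  interpret prob_space "density lborel (normal_density 0 \<sigma>)"
    using assms by (rule prob_space_normal_density)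
  have "emeasure (density lborel (normal_density 0 \<sigma>)) UNIV = 1"
    using emeasure_space_1 by simp
  then show ?thesis by (simp add: emeasure_density)
qed

lemma normal_neg_part:
  assumes s: "\<sigma> > 0"
  shows "(\<integral>\<^sup>+y. ennreal (normal_density 0 \<sigma> y) * ennreal (max 0 (- y)) \<partial>lborel) = ennreal (\<sigma> / sqrt (2 * pi))"
proof -
  let ?g = "\<lambda>y. ennreal (normal_density 0 \<sigma> y) * ennreal (max 0 (- y))"
  have "(\<integral>\<^sup>+y. ?g y \<partial>lborel) = (\<integral>\<^sup>+y. ?g y \<partial>distr lborel borel uminus)"
    by (simp add: lborel_distr_uminus)
  also have "\<dots> = (\<integral>\<^sup>+y. ?g (- y) \<partial>lborel)"
    by (subst nn_integral_distr) (auto simp: normal_density_def)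
  also have "\<dots> = (\<integral>\<^sup>+y. ennreal (normal_density 0 \<sigma> y * y) * indicator {0..} y \<partial>lborel)"
    by (rule nn_integral_cong) (auto simp: normal_density_def ennreal_mult'[symmetric] ennreal_eq_0_iff mult_nonneg_nonpos divide_nonpos_pos split: split_indicator intro!: divide_nonpos_nonneg mult_nonneg_nonpos)
  also have "\<dots> = ennreal (0 - (- \<sigma>\<^sup>2 * normal_density 0 \<sigma> 0))"
  proof (rule nn_integral_FTC_atLeast[where F="\<lambda>y. - \<sigma>\<^sup>2 * normal_density 0 \<sigma> y"])
    show "(\<lambda>y. normal_density 0 \<sigma> y * y) \<in> borel_measurable borel"
      by (simp add: normal_density_def)
    fix x :: real assume x: "0 \<le> x"
    show "DERIV (\<lambda>y. - \<sigma>\<^sup>2 * normal_density 0 \<sigma> y) x :> normal_density 0 \<sigma> x * x"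
      using s unfolding normal_density_def
      by (auto intro!: derivative_eq_intros simp: field_simps power2_eq_square)
    show "0 \<le> normal_density 0 \<sigma> x * x" using x by (simp add: normal_density_nonneg)
  next
    show "((\<lambda>y. - \<sigma>\<^sup>2 * normal_density 0 \<sigma> y) \<longlongrightarrow> 0) at_top"
      using s unfolding normal_density_def by real_asymp
  qed
  also have "ennreal (0 - (- \<sigma>\<^sup>2 * normal_density 0 \<sigma> 0)) = ennreal (\<sigma> / sqrt (2 * pi))"
    using s by (simp add: normal_density_def real_sqrt_mult field_simps power2_eq_square)
  finally show ?thesis .
qed

lemma normal_neg_part':
  assumes s: "\<sigma> > 0"
  shows "(\<integral>\<^sup>+y. ennreal (normal_density 0 \<sigma> y) * ennreal (- y) \<partial>lborel) = ennreal (\<sigma> / sqrt (2 * pi))"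
  using normal_neg_part[OF s] by simp



lemma prob_space_rayleigh:
  assumes "\<Omega> > 0" shows "prob_space (density lborel (rayleigh_density \<Omega>))"
  by (rule prob_spaceI) (simp add: emeasure_density rayleigh_total[OF assms])

lemma sigma_pos: "\<Omega> > 0 \<Longrightarrow> F > 0 \<Longrightarrow> pi * F * sqrt \<Omega> > 0"
  by simp

lemma prob_space_link:
  assumes "\<Omega> > 0" "F > 0" shows "prob_space (link_law \<Omega> F)"
  unfolding link_law_def
proof -
  interpret A: prob_space "density lborel (rayleigh_density \<Omega>)"
    using assms by (intro prob_space_rayleigh)
  interpret B: prob_space "density lborel (normal_density 0 (pi * F * sqrt \<Omega>))"
    using assms by (intro prob_space_normal_density sigma_pos)
  interpret pair_prob_space "density lborel (rayleigh_density \<Omega>)" "density lborel (normal_density 0 (pi * F * sqrt \<Omega>))" ..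
  show "prob_space (density lborel (rayleigh_density \<Omega>) \<Otimes>\<^sub>M density lborel (normal_density 0 (pi * F * sqrt \<Omega>)))"
    by (rule prob_space_axioms)
qed

lemma sets_link[measurable_cong]: "sets (link_law \<Omega> F) = sets (borel \<Otimes>\<^sub>M borel)"
  unfolding link_law_def by (intro sets_pair_measure_cong) auto

lemma link_sep:
  assumes "\<Omega> > 0" "F > 0"
    and f[measurable]: "f \<in> borel_measurable borel" and g[measurable]: "g \<in> borel_measurable borel"
  shows "(\<integral>\<^sup>+p. f (fst p) * g (snd p) \<partial>link_law \<Omega> F) =
    (\<integral>\<^sup>+x. ennreal (rayleigh_density \<Omega> x) * f x \<partial>lborel) *
    (\<integral>\<^sup>+y. ennreal (normal_density 0 (pi * F * sqrt \<Omega>) y) * g y \<partial>lborel)"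
proof -
  let ?A = "density lborel (rayleigh_density \<Omega>)"
  let ?B = "density lborel (normal_density 0 (pi * F * sqrt \<Omega>))"
  interpret B: prob_space ?B
    using assms by (intro prob_space_normal_density sigma_pos)
  have "(\<integral>\<^sup>+p. f (fst p) * g (snd p) \<partial>link_law \<Omega> F) = (\<integral>\<^sup>+x. \<integral>\<^sup>+y. f x * g y \<partial>?B \<partial>?A)"
    unfolding link_law_def by (subst B.nn_integral_fst[symmetric]) auto
  also have "\<dots> = (\<integral>\<^sup>+x. f x * (\<integral>\<^sup>+y. g y \<partial>?B) \<partial>?A)"
    by (subst nn_integral_cmult) auto
  also have "\<dots> = (\<integral>\<^sup>+x. f x \<partial>?A) * (\<integral>\<^sup>+y. g y \<partial>?B)"
    by (subst nn_integral_multc) auto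
  finally show ?thesis
    by (simp add: nn_integral_density)
qed

lemma link_fst:
  assumes "\<Omega> > 0" "F > 0"
    and f[measurable]: "f \<in> borel_measurable borel"
  shows "(\<integral>\<^sup>+p. f (fst p) \<partial>link_law \<Omega> F) =
    (\<integral>\<^sup>+x. ennreal (rayleigh_density \<Omega> x) * f x \<partial>lborel)"
  using link_sep[OF assms, of "\<lambda>_. 1"] normal_total[OF sigma_pos[OF assms(1,2)]] by simp



definition tailf :: "real \<Rightarrow> real \<Rightarrow> real" where
  "tailf \<Omega> x = (if 0 \<le> x then exp (- x\<^sup>2 / \<Omega>) else 1)"

lemma tailf_borel[measurable]: "tailf \<Omega> \<in> borel_measurable borel"
  unfolding tailf_def by measurable

lemma tail_any:
  assumes "\<Omega> > 0"
  shows "(\<integral>\<^sup>+x. ennreal (rayleigh_density \<Omega> x) * indicator {a..} x \<partial>lborel) = ennreal (tailf \<Omega> a)"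
proof (cases "a \<ge> 0")
  case True then show ?thesis using rayleigh_tail[OF assms True] by (simp add: tailf_def)
next
  case False
  have "(\<integral>\<^sup>+x. ennreal (rayleigh_density \<Omega> x) * indicator {a..} x \<partial>lborel) =
      (\<integral>\<^sup>+x. ennreal (rayleigh_density \<Omega> x) \<partial>lborel)"
    using False by (intro nn_integral_cong) (auto simp: rayleigh_density_def split: split_indicator)
  then show ?thesis using False rayleigh_total[OF assms] by (simp add: tailf_def)
qed

lemma tail_any_strict:
  assumes "\<Omega> > 0"
  shows "(\<integral>\<^sup>+x. ennreal (rayleigh_density \<Omega> x) * indicator {a<..} x \<partial>lborel) = ennreal (tailf \<Omega> a)"
proof (cases "a \<ge> 0")
  case True then show ?thesis using rayleigh_tail_strict[OF assms True] by (simp add: tailf_def)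
next
  case False
  have "(\<integral>\<^sup>+x. ennreal (rayleigh_density \<Omega> x) * indicator {a<..} x \<partial>lborel) =
      (\<integral>\<^sup>+x. ennreal (rayleigh_density \<Omega> x) \<partial>lborel)"
    using False by (intro nn_integral_cong) (auto simp: rayleigh_density_def split: split_indicator)
  then show ?thesis using False rayleigh_total[OF assms] by (simp add: tailf_def)
qed

lemma weighted_tl:
  assumes A: "\<Omega>A > 0" and B: "\<Omega>B > 0" and s: "s \<ge> 0"
  shows "(\<integral>\<^sup>+x. ennreal (rayleigh_density \<Omega>A x) * (indicator {..s} x * ennreal (tailf \<Omega>B x)) \<partial>lborel)
       = ennreal (\<Omega>A * \<Omega>B / (\<Omega>A + \<Omega>B) / \<Omega>A * (1 - exp (- s\<^sup>2 / (\<Omega>A * \<Omega>B / (\<Omega>A + \<Omega>B)))))"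
proof -
  have "(\<integral>\<^sup>+x. ennreal (rayleigh_density \<Omega>A x) * (indicator {..s} x * ennreal (tailf \<Omega>B x)) \<partial>lborel)
     = (\<integral>\<^sup>+x. ennreal (rayleigh_density \<Omega>A x) * ennreal (exp (- x\<^sup>2 / \<Omega>B)) * indicator {..s} x \<partial>lborel)"
    by (intro nn_integral_cong) (auto simp: rayleigh_density_def tailf_def split: split_indicator)
  then show ?thesis using rayleigh_weighted[OF A B s] by simp
qed

context
  fixes \<Omega>A \<Omega>B FA FB :: real
  assumes pos: "\<Omega>A > 0" "\<Omega>B > 0" "FA > 0" "FB > 0"
begin

interpretation LA: prob_space "link_law \<Omega>A FA" using pos by (intro prob_space_link)
interpretation LB: prob_space "link_law \<Omega>B FB" using pos by (intro prob_space_link)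
interpretation P: pair_prob_space "link_law \<Omega>A FA" "link_law \<Omega>B FB" ..

lemma two_above:
  "(\<integral>\<^sup>+z. indicator {th<..} (fst (fst z)) * indicator {th<..} (fst (snd z)) \<partial>(link_law \<Omega>A FA \<Otimes>\<^sub>M link_law \<Omega>B FB))
    = ennreal (tailf \<Omega>A th * tailf \<Omega>B th)"
proof -
  have "(\<integral>\<^sup>+z. indicator {th<..} (fst (fst z)) * indicator {th<..} (fst (snd z)) \<partial>(link_law \<Omega>A FA \<Otimes>\<^sub>M link_law \<Omega>B FB))
     = (\<integral>\<^sup>+p. \<integral>\<^sup>+q. indicator {th<..} (fst p) * indicator {th<..} (fst q) \<partial>link_law \<Omega>B FB \<partial>link_law \<Omega>A FA)"
    by (subst LB.nn_integral_fst[symmetric]) auto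
  also have "\<dots> = (\<integral>\<^sup>+p. indicator {th<..} (fst p) * ennreal (tailf \<Omega>B th) \<partial>link_law \<Omega>A FA)"
    by (subst nn_integral_cmult) (auto simp: link_fst pos tail_any_strict)
  also have "\<dots> = ennreal (tailf \<Omega>A th) * ennreal (tailf \<Omega>B th)"
    by (subst nn_integral_multc) (auto simp: link_fst pos tail_any_strict)
  finally show ?thesis by (simp add: ennreal_mult tailf_def)
qed

lemma ind_ge_meas[measurable]:
  "(\<lambda>z. indicator {fst (fst z)..} (fst (snd z)) :: ennreal) \<in> borel_measurable (link_law \<Omega>A FA \<Otimes>\<^sub>M link_law \<Omega>B FB)"
proof -
  have "(\<lambda>z. indicator {fst (fst z)..} (fst (snd z)) :: ennreal) = (\<lambda>z. if fst (fst z) \<le> fst (snd z) then 1 else 0)"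
    by (auto simp: indicator_def)
  also have "\<dots> \<in> borel_measurable (link_law \<Omega>A FA \<Otimes>\<^sub>M link_law \<Omega>B FB)" by measurable
  finally show ?thesis .
qed

lemma ind_gt_meas[measurable]:
  "(\<lambda>z. indicator {fst (snd z)<..} (fst (fst z)) :: ennreal) \<in> borel_measurable (link_law \<Omega>A FA \<Otimes>\<^sub>M link_law \<Omega>B FB)"
proof -
  have "(\<lambda>z. indicator {fst (snd z)<..} (fst (fst z)) :: ennreal) = (\<lambda>z. if fst (snd z) < fst (fst z) then 1 else 0)"
    by (auto simp: indicator_def)
  also have "\<dots> \<in> borel_measurable (link_law \<Omega>A FA \<Otimes>\<^sub>M link_law \<Omega>B FB)" by measurable
  finally show ?thesis .
qed

lemma term1:
  assumes s: "s \<ge> 0"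
  shows "(\<integral>\<^sup>+z. indicator {..s} (fst (fst z)) * indicator {fst (fst z)..} (fst (snd z)) * ennreal (max 0 (- snd (fst z)))
      \<partial>(link_law \<Omega>A FA \<Otimes>\<^sub>M link_law \<Omega>B FB))
    = ennreal (\<Omega>A * \<Omega>B / (\<Omega>A + \<Omega>B) / \<Omega>A * (1 - exp (- s\<^sup>2 / (\<Omega>A * \<Omega>B / (\<Omega>A + \<Omega>B)))) *
        (pi * FA * sqrt \<Omega>A / sqrt (2 * pi)))"
proof -
  have inner: "(\<integral>\<^sup>+q. indicator {..s} (fst p) * indicator {fst p..} (fst q) * ennreal (max 0 (- snd p)) \<partial>link_law \<Omega>B FB)
     = (indicator {..s} (fst p) * ennreal (tailf \<Omega>B (fst p))) * ennreal (max 0 (- snd p))" for p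
  proof -
    have "(\<integral>\<^sup>+q. indicator {..s} (fst p) * indicator {fst p..} (fst q) * ennreal (max 0 (- snd p)) \<partial>link_law \<Omega>B FB)
      = (\<integral>\<^sup>+q. (indicator {..s} (fst p) * ennreal (max 0 (- snd p))) * indicator {fst p..} (fst q) \<partial>link_law \<Omega>B FB)"
      by (intro nn_integral_cong) (simp add: ac_simps)
    also have "\<dots> = (indicator {..s} (fst p) * ennreal (max 0 (- snd p))) * ennreal (tailf \<Omega>B (fst p))"
      by (subst nn_integral_cmult) (auto simp: link_fst pos tail_any)
    finally show ?thesis by (simp add: ac_simps)
  qed
  have "(\<integral>\<^sup>+z. indicator {..s} (fst (fst z)) * indicator {fst (fst z)..} (fst (snd z)) * ennreal (max 0 (- snd (fst z)))
      \<partial>(link_law \<Omega>A FA \<Otimes>\<^sub>M link_law \<Omega>B FB))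
     = (\<integral>\<^sup>+p. \<integral>\<^sup>+q. indicator {..s} (fst p) * indicator {fst p..} (fst q) * ennreal (max 0 (- snd p)) \<partial>link_law \<Omega>B FB \<partial>link_law \<Omega>A FA)"
    by (subst LB.nn_integral_fst[symmetric]) auto
  also have "\<dots> = (\<integral>\<^sup>+p. (indicator {..s} (fst p) * ennreal (tailf \<Omega>B (fst p))) * ennreal (max 0 (- snd p)) \<partial>link_law \<Omega>A FA)"
    by (simp only: inner)
  also have "\<dots> = ennreal (\<Omega>A * \<Omega>B / (\<Omega>A + \<Omega>B) / \<Omega>A * (1 - exp (- s\<^sup>2 / (\<Omega>A * \<Omega>B / (\<Omega>A + \<Omega>B)))))
       * ennreal (pi * FA * sqrt \<Omega>A / sqrt (2 * pi))"
    by (subst link_sep[OF pos(1,3)]) (auto simp: weighted_tl pos s normal_neg_part normal_neg_part')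
  finally show ?thesis
    by (subst ennreal_mult'') (use pos in auto)
qed

lemma term2:
  assumes s: "s \<ge> 0"
  shows "(\<integral>\<^sup>+z. indicator {..s} (fst (snd z)) * indicator {fst (snd z)<..} (fst (fst z)) * ennreal (max 0 (- snd (snd z)))
      \<partial>(link_law \<Omega>A FA \<Otimes>\<^sub>M link_law \<Omega>B FB))
    = ennreal (\<Omega>B * \<Omega>A / (\<Omega>B + \<Omega>A) / \<Omega>B * (1 - exp (- s\<^sup>2 / (\<Omega>B * \<Omega>A / (\<Omega>B + \<Omega>A)))) *
        (pi * FB * sqrt \<Omega>B / sqrt (2 * pi)))"
proof -
  have inner: "(\<integral>\<^sup>+p. indicator {..s} (fst q) * indicator {fst q<..} (fst p) * ennreal (max 0 (- snd q)) \<partial>link_law \<Omega>A FA)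
     = (indicator {..s} (fst q) * ennreal (tailf \<Omega>A (fst q))) * ennreal (max 0 (- snd q))" for q
  proof -
    have "(\<integral>\<^sup>+p. indicator {..s} (fst q) * indicator {fst q<..} (fst p) * ennreal (max 0 (- snd q)) \<partial>link_law \<Omega>A FA)
      = (\<integral>\<^sup>+p. (indicator {..s} (fst q) * ennreal (max 0 (- snd q))) * indicator {fst q<..} (fst p) \<partial>link_law \<Omega>A FA)"
      by (intro nn_integral_cong) (simp add: ac_simps)
    also have "\<dots> = (indicator {..s} (fst q) * ennreal (max 0 (- snd q))) * ennreal (tailf \<Omega>A (fst q))"
      by (subst nn_integral_cmult) (auto simp: link_fst pos tail_any_strict)
    finally show ?thesis by (simp add: ac_simps)
  qed
  have "(\<integral>\<^sup>+z. indicator {..s} (fst (snd z)) * indicator {fst (snd z)<..} (fst (fst z)) * ennreal (max 0 (- snd (snd z)))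
      \<partial>(link_law \<Omega>A FA \<Otimes>\<^sub>M link_law \<Omega>B FB))
     = (\<integral>\<^sup>+p. \<integral>\<^sup>+q. indicator {..s} (fst q) * indicator {fst q<..} (fst p) * ennreal (max 0 (- snd q)) \<partial>link_law \<Omega>B FB \<partial>link_law \<Omega>A FA)"
    by (subst LB.nn_integral_fst[symmetric]) auto
  also have "\<dots> = (\<integral>\<^sup>+q. \<integral>\<^sup>+p. indicator {..s} (fst q) * indicator {fst q<..} (fst p) * ennreal (max 0 (- snd q)) \<partial>link_law \<Omega>A FA \<partial>link_law \<Omega>B FB)"
    by (subst P.Fubini') auto
  also have "\<dots> = (\<integral>\<^sup>+q. (indicator {..s} (fst q) * ennreal (tailf \<Omega>A (fst q))) * ennreal (max 0 (- snd q)) \<partial>link_law \<Omega>B FB)"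
    by (simp only: inner)
  also have "\<dots> = ennreal (\<Omega>B * \<Omega>A / (\<Omega>B + \<Omega>A) / \<Omega>B * (1 - exp (- s\<^sup>2 / (\<Omega>B * \<Omega>A / (\<Omega>B + \<Omega>A)))))
       * ennreal (pi * FB * sqrt \<Omega>B / sqrt (2 * pi))"
    by (subst link_sep[OF pos(2,4)]) (auto simp: weighted_tl pos s normal_neg_part normal_neg_part')
  finally show ?thesis
    by (subst ennreal_mult'') (use pos in auto)
qed

end



definition gmap :: "(real \<times> real) \<times> (real \<times> real) \<Rightarrow> real \<times> real" where
  "gmap = (\<lambda>((x1, y1), (x2, y2)). (min x1 x2, if x1 \<le> x2 then y1 else y2))"

lemma gmap_alt: "gmap z = (min (fst (fst z)) (fst (snd z)), if fst (fst z) \<le> fst (snd z) then snd (fst z) else snd (snd z))"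
  by (auto simp: gmap_def split: prod.splits)

lemma relay_law_gmap: "relay_law \<Omega> F i = distr (link_law (\<Omega> i SR) (F i SR) \<Otimes>\<^sub>M link_law (\<Omega> i RD) (F i RD)) borel gmap"
  unfolding relay_law_def gmap_def by simp

lemma alg_aux:
  assumes "Oc > 0" "\<Omega> > 0"
  shows "Oc / \<Omega> * (e * (2 * r / Oc)) * (pi * F * sqrt \<Omega> / sqrt (2 * pi)) = sqrt (2 * pi) * (r / sqrt \<Omega> * F) * e"
proof -
  define a where "a = sqrt \<Omega>"
  define p where "p = sqrt (2 * pi)"
  have a: "a > 0" "\<Omega> = a * a" using assms by (auto simp: a_def)
  have p: "p > 0" "pi = p * p / 2" by (auto simp: p_def)
  show ?thesis unfolding a_def[symmetric] p_def[symmetric]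
    apply (subst a(2)) apply (subst p(2))
    using a p assms by (simp add: field_simps)
qed

context
  fixes \<Omega>A \<Omega>B FA FB :: real
  assumes pos: "\<Omega>A > 0" "\<Omega>B > 0" "FA > 0" "FB > 0"
begin

lemma gmap_meas[measurable]: "gmap \<in> (link_law \<Omega>A FA \<Otimes>\<^sub>M link_law \<Omega>B FB) \<rightarrow>\<^sub>M borel"
proof -
  have "gmap = (\<lambda>z. (min (fst (fst z)) (fst (snd z)), if fst (fst z) \<le> fst (snd z) then snd (fst z) else snd (snd z)))"
    by (rule ext) (rule gmap_alt)
  also have "\<dots> \<in> (link_law \<Omega>A FA \<Otimes>\<^sub>M link_law \<Omega>B FB) \<rightarrow>\<^sub>M borel \<Otimes>\<^sub>M borel"
    by measurable
  finally show ?thesis by (simp add: borel_prod)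
qed

lemma lcr_fun_meas[measurable]: "(\<lambda>p::real\<times>real. indicator {..s} (fst p) * max 0 (- snd p) :: real) \<in> borel_measurable borel"
proof -
  have "(\<lambda>p::real\<times>real. indicator {..s} (fst p) * max 0 (- snd p) :: real) \<in> borel_measurable (borel \<Otimes>\<^sub>M borel)"
    by measurable
  then show ?thesis by (simp add: borel_prod)
qed

lemma above_relay:
  assumes th: "th \<ge> 0"
  shows "measure (distr (link_law \<Omega>A FA \<Otimes>\<^sub>M link_law \<Omega>B FB) borel gmap) {p. fst p > th} = tailf \<Omega>A th * tailf \<Omega>B th"
proof -
  let ?M = "link_law \<Omega>A FA \<Otimes>\<^sub>M link_law \<Omega>B FB"
  have S0: "open {p::real\<times>real. th < fst p}" by (intro open_Collect_less continuous_intros)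
  then have S: "{p::real\<times>real. fst p > th} \<in> sets borel" by simp
  have "emeasure (distr ?M borel gmap) {p. fst p > th} = (\<integral>\<^sup>+p. indicator {p. fst p > th} p \<partial>distr ?M borel gmap)"
    using S by (simp add: nn_integral_indicator)
  also have "\<dots> = (\<integral>\<^sup>+z. indicator {p. fst p > th} (gmap z) \<partial>?M)"
    using S by (subst nn_integral_distr) auto
  also have "\<dots> = (\<integral>\<^sup>+z. indicator {th<..} (fst (fst z)) * indicator {th<..} (fst (snd z)) \<partial>?M)"
    by (intro nn_integral_cong) (auto simp: gmap_alt split: split_indicator)
  also have "\<dots> = ennreal (tailf \<Omega>A th * tailf \<Omega>B th)"
    using pos by (rule two_above)
  finally show ?thesis
    by (simp add: measure_def tailf_def)
qed

lemma lcr_int: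
  assumes s: "s \<ge> 0"
  shows "(\<integral>p. indicator {..s} (fst p) * max 0 (- snd p) \<partial>distr (link_law \<Omega>A FA \<Otimes>\<^sub>M link_law \<Omega>B FB) borel gmap)
    = \<Omega>A * \<Omega>B / (\<Omega>A + \<Omega>B) / \<Omega>A * (1 - exp (- s\<^sup>2 / (\<Omega>A * \<Omega>B / (\<Omega>A + \<Omega>B)))) *
        (pi * FA * sqrt \<Omega>A / sqrt (2 * pi))
      + \<Omega>B * \<Omega>A / (\<Omega>B + \<Omega>A) / \<Omega>B * (1 - exp (- s\<^sup>2 / (\<Omega>B * \<Omega>A / (\<Omega>B + \<Omega>A)))) *
        (pi * FB * sqrt \<Omega>B / sqrt (2 * pi))"
proof -
  let ?M = "link_law \<Omega>A FA \<Otimes>\<^sub>M link_law \<Omega>B FB"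
  have n1: "0 \<le> \<Omega>A * \<Omega>B / (\<Omega>A + \<Omega>B) / \<Omega>A * (1 - exp (- s\<^sup>2 / (\<Omega>A * \<Omega>B / (\<Omega>A + \<Omega>B)))) *
        (pi * FA * sqrt \<Omega>A / sqrt (2 * pi))"
    using pos by (intro mult_nonneg_nonneg) (auto simp: divide_nonneg_pos)
  have n2: "0 \<le> \<Omega>B * \<Omega>A / (\<Omega>B + \<Omega>A) / \<Omega>B * (1 - exp (- s\<^sup>2 / (\<Omega>B * \<Omega>A / (\<Omega>B + \<Omega>A)))) *
        (pi * FB * sqrt \<Omega>B / sqrt (2 * pi))"
    using pos by (intro mult_nonneg_nonneg) (auto simp: divide_nonneg_pos)
  have "(\<integral>p. indicator {..s} (fst p) * max 0 (- snd p) \<partial>distr ?M borel gmap)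
      = (\<integral>z. indicator {..s} (fst (gmap z)) * max 0 (- snd (gmap z)) \<partial>?M)"
    by (subst integral_distr) auto
  also have "\<dots> = enn2real (\<integral>\<^sup>+z. ennreal (indicator {..s} (fst (gmap z)) * max 0 (- snd (gmap z))) \<partial>?M)"
    by (rule integral_eq_nn_integral) auto
  also have "(\<integral>\<^sup>+z. ennreal (indicator {..s} (fst (gmap z)) * max 0 (- snd (gmap z))) \<partial>?M)
     = (\<integral>\<^sup>+z. indicator {..s} (fst (fst z)) * indicator {fst (fst z)..} (fst (snd z)) * ennreal (max 0 (- snd (fst z)))
          + indicator {..s} (fst (snd z)) * indicator {fst (snd z)<..} (fst (fst z)) * ennreal (max 0 (- snd (snd z))) \<partial>?M)"
    by (intro nn_integral_cong) (auto simp: gmap_alt min_def split: split_indicator)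
  also have "\<dots> = (\<integral>\<^sup>+z. indicator {..s} (fst (fst z)) * indicator {fst (fst z)..} (fst (snd z)) * ennreal (max 0 (- snd (fst z))) \<partial>?M)
        + (\<integral>\<^sup>+z. indicator {..s} (fst (snd z)) * indicator {fst (snd z)<..} (fst (fst z)) * ennreal (max 0 (- snd (snd z))) \<partial>?M)"
    using pos by (intro nn_integral_add) auto
  finally show ?thesis
    using term1[OF pos s] term2[OF pos s] n1 n2 by (simp add: ennreal_plus[symmetric] del: ennreal_plus)
qed

lemma lcr_relay:
  assumes r: "r > 0"
  shows "down_lcr (distr (link_law \<Omega>A FA \<Otimes>\<^sub>M link_law \<Omega>B FB) borel gmap) r =
    sqrt (2 * pi) * (r / sqrt \<Omega>A * FA + r / sqrt \<Omega>B * FB) * exp (- r\<^sup>2 / (\<Omega>A * \<Omega>B / (\<Omega>A + \<Omega>B)))"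
proof -
  define Oc where "Oc = \<Omega>A * \<Omega>B / (\<Omega>A + \<Omega>B)"
  have Oc: "Oc > 0" using pos by (simp add: Oc_def)
  have Oc': "\<Omega>B * \<Omega>A / (\<Omega>B + \<Omega>A) = Oc" by (simp add: Oc_def ac_simps)
  define mA where "mA = pi * FA * sqrt \<Omega>A / sqrt (2 * pi)"
  define mB where "mB = pi * FB * sqrt \<Omega>B / sqrt (2 * pi)"
  define C where "C = (\<lambda>s. Oc / \<Omega>A * (1 - exp (- s\<^sup>2 / Oc)) * mA + Oc / \<Omega>B * (1 - exp (- s\<^sup>2 / Oc)) * mB)"
  have ev: "eventually (\<lambda>s. (\<integral>p. indicator {..s} (fst p) * max 0 (- snd p) \<partial>distr (link_law \<Omega>A FA \<Otimes>\<^sub>M link_law \<Omega>B FB) borel gmap) = C s) (nhds r)"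
  proof -
    have "eventually (\<lambda>s. s \<in> {0<..}) (nhds r)" using r by (intro eventually_nhds_in_open) auto
    then show ?thesis
      by eventually_elim (auto simp: lcr_int C_def Oc_def[symmetric] Oc' mA_def mB_def)
  qed
  have D: "DERIV C r :> Oc / \<Omega>A * (exp (- r\<^sup>2 / Oc) * (2 * r / Oc)) * mA + Oc / \<Omega>B * (exp (- r\<^sup>2 / Oc) * (2 * r / Oc)) * mB"
    unfolding C_def using Oc pos by (auto intro!: derivative_eq_intros simp: field_simps power2_eq_square)
  have "DERIV (\<lambda>s. \<integral>p. indicator {..s} (fst p) * max 0 (- snd p) \<partial>distr (link_law \<Omega>A FA \<Otimes>\<^sub>M link_law \<Omega>B FB) borel gmap) r
       :> Oc / \<Omega>A * (exp (- r\<^sup>2 / Oc) * (2 * r / Oc)) * mA + Oc / \<Omega>B * (exp (- r\<^sup>2 / Oc) * (2 * r / Oc)) * mB"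
    using D by (subst DERIV_cong_ev[OF refl ev refl])
  then have "down_lcr (distr (link_law \<Omega>A FA \<Otimes>\<^sub>M link_law \<Omega>B FB) borel gmap) r
     = Oc / \<Omega>A * (exp (- r\<^sup>2 / Oc) * (2 * r / Oc)) * mA + Oc / \<Omega>B * (exp (- r\<^sup>2 / Oc) * (2 * r / Oc)) * mB"
    unfolding down_lcr_def by (rule DERIV_imp_deriv)
  also have "\<dots> = sqrt (2 * pi) * (r / sqrt \<Omega>A * FA + r / sqrt \<Omega>B * FB) * exp (- r\<^sup>2 / Oc)"
  proof -
    have pp: "pi = sqrt (2 * pi) * sqrt (2 * pi) / 2" by simp
    have t1: "Oc / \<Omega>A * (exp (- r\<^sup>2 / Oc) * (2 * r / Oc)) * mA = sqrt (2 * pi) * (r / sqrt \<Omega>A * FA) * exp (- r\<^sup>2 / Oc)"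
      unfolding mA_def
      by (rule alg_aux) (use Oc pos in auto)
    have t2: "Oc / \<Omega>B * (exp (- r\<^sup>2 / Oc) * (2 * r / Oc)) * mB = sqrt (2 * pi) * (r / sqrt \<Omega>B * FB) * exp (- r\<^sup>2 / Oc)"
      unfolding mB_def
      by (rule alg_aux) (use Oc pos in auto)
    show ?thesis unfolding t1 t2 by (simp add: algebra_simps)
  qed
  finally show ?thesis by (simp add: Oc_def)
qed

end



lemma chain_alg:
  fixes a b u1 v1 u2 v2 c1 c2 q1 q2 :: real
  assumes a: "a > 1" and b: "b > 1" and q1: "q1 = 1 / a" and q2: "q2 = 1 / b"
    and eu1: "u1 = q1 * (u1 + v1 + (1 - q2) * u2)"
    and ev1: "v1 = (1 - q1) * (v1 + (1 - q2) * u2)"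
    and eu2: "u2 = q2 * (u2 + v2 + (1 - q1) * u1)"
    and ev2: "v2 = (1 - q2) * (v2 + (1 - q1) * u1)"
    and tot: "u1 + v1 + u2 + v2 = 1"
  shows "(u1 + v1) * (c1 * q1) + (u2 + v2) * (c2 * q2) =
     1 / (2 * a - a^2 + 2 * b - b^2 - 2 * (a * b) + a^2 * b + a * b^2 - 2) *
     (1 / (a * b) * (b^2 - b) * c1 + 1 / (a * b) * (a^2 - a) * c2 + (c1 + c2) * (a - 1) * (b - 1))"
proof -
  have h1: "(1 - q1) * u1 = (1 - q2) * u2"
  proof -
    have "u1 + v1 = q1 * u1 + v1 + (1 - q2) * u2"
      using eu1 ev1 by (simp add: algebra_simps)
    then show ?thesis by (simp add: algebra_simps)
  qed
  have h2: "q1 * v1 = (1 - q1) * (1 - q2) * u2"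
    using ev1 by (simp add: algebra_simps)
  have h3: "q2 * v2 = (1 - q1) * (1 - q2) * u1"
    using ev2 by (simp add: algebra_simps)
  have aq: "q1 * a = 1" "q2 * b = 1" using a b q1 q2 by auto
  have U2: "u2 = (a - 1) * b / (a * (b - 1)) * u1"
    using h1 a b by (simp add: q1 q2 field_simps)
  have "q1 * v1 = (1 - q1) * ((1 - q2) * u2)" using h2 by (simp add: mult.assoc)
  also have "\<dots> = (1 - q1) * ((1 - q1) * u1)" by (simp add: h1)
  finally have h2': "q1 * v1 = (1 - q1) * ((1 - q1) * u1)" .
  have V1: "v1 = (a - 1)^2 / a * u1"
    using h2' a by (simp add: q1 field_simps power2_eq_square)
  have V2: "v2 = (a - 1) * (b - 1) / a * u1"
    using h3 a b by (simp add: q1 q2 field_simps)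
  have Dpos: "2 * a - a^2 + 2 * b - b^2 - 2 * (a * b) + a^2 * b + a * b^2 - 2 = (a-1)*(b-1)*(a+b) + (a-1) + (b-1)"
    by (simp add: algebra_simps power2_eq_square)
  have Dp: "(a-1)*(b-1)*(a+b) + (a-1) + (b-1) > 0"
  proof -
    have "(a-1)*(b-1)*(a+b) > 0" using a b by (intro mult_pos_pos) auto
    then show ?thesis using a b by linarith
  qed
  define K where "K = 1 + (a - 1)^2 / a + (a - 1) * b / (a * (b - 1)) + (a - 1) * (b - 1) / a"
  have "u1 * K = 1" using tot unfolding U2 V1 V2 K_def by (simp add: algebra_simps)
  then have "u1 * (K * (a * (b - 1))) = a * (b - 1)" by (simp add: mult.assoc[symmetric])
  moreover have "K * (a * (b - 1)) = (a-1)*(b-1)*(a+b) + (a-1) + (b-1)"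
    unfolding K_def using a b by (simp add: field_simps power2_eq_square)
  ultimately have U1: "u1 * ((a-1)*(b-1)*(a+b) + (a-1) + (b-1)) = a * (b - 1)" by simp
  define d where "d = (a-1)*(b-1)*(a+b) + (a-1) + (b-1)"
  have d: "d > 0" using Dp by (simp add: d_def)
  have "u1 * d = a * (b - 1)" using U1 by (simp only: d_def)
  then have u1: "u1 = a * (b - 1) / d" using d by (simp add: eq_divide_eq)
  show ?thesis
    unfolding Dpos d_def[symmetric] U2 V1 V2 q1 q2 u1
    using a b d by (simp add: field_simps power2_eq_square)
qed



lemma UNIV_state: "(UNIV :: dssc_state set) =
  {(R1,True,True), (R1,True,False), (R1,False,True), (R1,False,False),
   (R2,True,True), (R2,True,False), (R2,False,True), (R2,False,False)}"
  by (auto intro: relay.exhaust)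

lemma sum_state: "(\<Sum>x\<in>UNIV. f x :: real) =
  f (R1,True,True) + f (R1,True,False) + f (R1,False,True) + f (R1,False,False) +
  f (R2,True,True) + f (R2,True,False) + f (R2,False,True) + f (R2,False,False)"
  unfolding UNIV_state by (simp add: algebra_simps)

lemma sum_bool2: "(\<Sum>s\<in>UNIV. f s :: real) = f (True,True) + f (True,False) + f (False,True) + f (False,False)"
proof -
  have U: "(UNIV :: (bool \<times> bool) set) = {(True,True),(True,False),(False,True),(False,False)}" by auto
  show ?thesis unfolding U by (simp add: algebra_simps)
qed

lemma relay_facts:
  assumes pos: "\<And>i h. \<Omega> i h > 0" "\<And>i h. F i h > 0" and th: "th > 0"
  shows "above_prob \<Omega> F th i = exp (- th\<^sup>2 / (\<Omega> i SR * \<Omega> i RD / (\<Omega> i SR + \<Omega> i RD)))"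
    and "down_lcr (relay_law \<Omega> F i) th = sqrt (2 * pi) * (th / sqrt (\<Omega> i SR) * F i SR + th / sqrt (\<Omega> i RD) * F i RD)
          * exp (- th\<^sup>2 / (\<Omega> i SR * \<Omega> i RD / (\<Omega> i SR + \<Omega> i RD)))"
proof -
  have p: "\<Omega> i SR > 0" "\<Omega> i RD > 0" "F i SR > 0" "F i RD > 0" using pos by auto
  have "above_prob \<Omega> F th i = tailf (\<Omega> i SR) th * tailf (\<Omega> i RD) th"
    unfolding above_prob_def relay_law_gmap using above_relay[OF p] th by simp
  also have "\<dots> = exp (- th\<^sup>2 / (\<Omega> i SR * \<Omega> i RD / (\<Omega> i SR + \<Omega> i RD)))"
    using th p by (simp add: tailf_def exp_add[symmetric] field_simps)
  finally show "above_prob \<Omega> F th i = exp (- th\<^sup>2 / (\<Omega> i SR * \<Omega> i RD / (\<Omega> i SR + \<Omega> i RD)))" .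
  show "down_lcr (relay_law \<Omega> F i) th = sqrt (2 * pi) * (th / sqrt (\<Omega> i SR) * F i SR + th / sqrt (\<Omega> i RD) * F i RD)
          * exp (- th\<^sup>2 / (\<Omega> i SR * \<Omega> i RD / (\<Omega> i SR + \<Omega> i RD)))"
    unfolding relay_law_gmap using lcr_relay[OF p th] .
qed



theorem theorem3:
  fixes \<Omega> F :: "relay \<Rightarrow> hop \<Rightarrow> real" and \<Gamma> T :: real and \<pi> :: "dssc_state \<Rightarrow> real"
  assumes "\<And>i h. \<Omega> i h > 0" and "\<And>i h. F i h > 0" and "\<Gamma> > 0" and "T > 0"
    and "dssc_stationary \<Omega> F \<Gamma> T \<pi>"
  shows "let O1 = \<Omega> R1 SR * \<Omega> R1 RD / (\<Omega> R1 SR + \<Omega> R1 RD);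
             O2 = \<Omega> R2 SR * \<Omega> R2 RD / (\<Omega> R2 SR + \<Omega> R2 RD);
             c1 = sqrt (T / (\<Gamma> * \<Omega> R1 SR)) * F R1 SR + sqrt (T / (\<Gamma> * \<Omega> R1 RD)) * F R1 RD;
             c2 = sqrt (T / (\<Gamma> * \<Omega> R2 SR)) * F R2 SR + sqrt (T / (\<Gamma> * \<Omega> R2 RD)) * F R2 RD;
             E = exp (- (T * (O1 + O2) / (\<Gamma> * O1 * O2)));
             \<Delta> = 2 * exp (T / (\<Gamma> * O1)) - exp (2 * T / (\<Gamma> * O1))
                 + 2 * exp (T / (\<Gamma> * O2)) - exp (2 * T / (\<Gamma> * O2))
                 - 2 * exp (T * (O1 + O2) / (\<Gamma> * O1 * O2))
                 + exp (T * (O1 + 2 * O2) / (\<Gamma> * O1 * O2))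
                 + exp (T * (2 * O1 + O2) / (\<Gamma> * O1 * O2)) - 2
         in dssc_switching_rate \<Omega> F \<Gamma> T \<pi> =
              sqrt (2 * pi) / \<Delta> *
                (E * (exp (2 * T / (\<Gamma> * O2)) - exp (T / (\<Gamma> * O2))) * c1
                 + E * (exp (2 * T / (\<Gamma> * O1)) - exp (T / (\<Gamma> * O1))) * c2
                 + (c1 + c2) * (exp (T / (\<Gamma> * O1)) - 1) * (exp (T / (\<Gamma> * O2)) - 1))"
proof -
  note pos = assms(1,2)
  have G: "\<Gamma> > 0" and T: "T > 0" by (fact assms(3), fact assms(4))
  define th where "th = sqrt (T / \<Gamma>)"
  have th: "th > 0" using G T by (simp add: th_def)
  have th2: "th\<^sup>2 = T / \<Gamma>" using G T by (simp add: th_def)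
  define O1 where "O1 = \<Omega> R1 SR * \<Omega> R1 RD / (\<Omega> R1 SR + \<Omega> R1 RD)"
  define O2 where "O2 = \<Omega> R2 SR * \<Omega> R2 RD / (\<Omega> R2 SR + \<Omega> R2 RD)"
  have O1: "O1 > 0" using pos by (simp add: O1_def add_pos_pos)
  have O2: "O2 > 0" using pos by (simp add: O2_def add_pos_pos)
  define c1 where "c1 = sqrt (T / (\<Gamma> * \<Omega> R1 SR)) * F R1 SR + sqrt (T / (\<Gamma> * \<Omega> R1 RD)) * F R1 RD"
  define c2 where "c2 = sqrt (T / (\<Gamma> * \<Omega> R2 SR)) * F R2 SR + sqrt (T / (\<Gamma> * \<Omega> R2 RD)) * F R2 RD"
  define a where "a = exp (T / (\<Gamma> * O1))"
  define b where "b = exp (T / (\<Gamma> * O2))"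
  have a1: "a > 1" using G T O1 by (simp add: a_def)
  have b1: "b > 1" using G T O2 by (simp add: b_def)
  define q1 where "q1 = 1 / a"
  define q2 where "q2 = 1 / b"
  have sq: "th / sqrt x = sqrt (T / (\<Gamma> * x))" if "x > 0" for x
    using that G T by (simp add: th_def real_sqrt_divide real_sqrt_mult)
  have ex1: "exp (- th\<^sup>2 / O1) = q1" using G O1
    by (simp add: q1_def a_def th2 exp_minus divide_divide_eq_left inverse_eq_divide mult.commute)
  have ex2: "exp (- th\<^sup>2 / O2) = q2" using G O2
    by (simp add: q2_def b_def th2 exp_minus divide_divide_eq_left inverse_eq_divide mult.commute)
  have q: "above_prob \<Omega> F th R1 = q1" "above_prob \<Omega> F th R2 = q2"
    using relay_facts(1)[where \<Omega>=\<Omega> and F=F and i=R1, OF pos th] relay_facts(1)[where \<Omega>=\<Omega> and F=F and i=R2, OF pos th]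
    by (simp_all only: O1_def[symmetric] O2_def[symmetric] ex1 ex2)
  have L: "down_lcr (relay_law \<Omega> F R1) th = sqrt (2 * pi) * c1 * q1"
          "down_lcr (relay_law \<Omega> F R2) th = sqrt (2 * pi) * c2 * q2"
    using relay_facts(2)[where \<Omega>=\<Omega> and F=F and i=R1, OF pos th] relay_facts(2)[where \<Omega>=\<Omega> and F=F and i=R2, OF pos th]
    by (simp_all only: O1_def[symmetric] O2_def[symmetric] ex1 ex2 sq pos c1_def[symmetric] c2_def[symmetric])
  have st: "\<And>y. \<pi> y = (\<Sum>x\<in>UNIV. \<pi> x * dssc_trans (above_prob \<Omega> F th) x y)"
    and tot: "(\<Sum>x\<in>UNIV. \<pi> x) = 1"
    using assms(5) unfolding dssc_stationary_def th_def by auto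
  define u1 where "u1 = \<pi> (R1,True,True) + \<pi> (R1,True,False)"
  define v1 where "v1 = \<pi> (R1,False,True) + \<pi> (R1,False,False)"
  define u2 where "u2 = \<pi> (R2,True,True) + \<pi> (R2,False,True)"
  define v2 where "v2 = \<pi> (R2,True,False) + \<pi> (R2,False,False)"
  have st': "\<pi> y = (\<Sum>x\<in>UNIV. \<pi> x * dssc_trans (\<lambda>i. if i = R1 then q1 else q2) x y)" for y
  proof -
    have "above_prob \<Omega> F th = (\<lambda>i. if i = R1 then q1 else q2)"
      by (rule ext) (metis q relay.exhaust)
    then show ?thesis using st[of y] by simp
  qed
  have E1: "\<pi> (R1,True,True) = q1 * q2 * (u1 + v1)"
    using st'[of "(R1,True,True)"] by (simp add: sum_state dssc_trans_def bern_def ind_def dssc_next_def u1_def v1_def algebra_simps)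
  have E2: "\<pi> (R1,True,False) = q1 * (1 - q2) * (u1 + v1 + u2)"
    using st'[of "(R1,True,False)"] by (simp add: sum_state dssc_trans_def bern_def ind_def dssc_next_def u1_def v1_def u2_def algebra_simps)
  have E3: "\<pi> (R1,False,True) = (1 - q1) * q2 * v1"
    using st'[of "(R1,False,True)"] by (simp add: sum_state dssc_trans_def bern_def ind_def dssc_next_def u1_def v1_def algebra_simps)
  have E4: "\<pi> (R1,False,False) = (1 - q1) * (1 - q2) * (v1 + u2)"
    using st'[of "(R1,False,False)"] by (simp add: sum_state dssc_trans_def bern_def ind_def dssc_next_def u1_def v1_def u2_def algebra_simps)
  have E5: "\<pi> (R2,True,True) = q1 * q2 * (u2 + v2)"
    using st'[of "(R2,True,True)"] by (simp add: sum_state dssc_trans_def bern_def ind_def dssc_next_def u2_def v2_def algebra_simps)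
  have E6: "\<pi> (R2,False,True) = (1 - q1) * q2 * (u2 + v2 + u1)"
    using st'[of "(R2,False,True)"] by (simp add: sum_state dssc_trans_def bern_def ind_def dssc_next_def u1_def u2_def v2_def algebra_simps)
  have E7: "\<pi> (R2,True,False) = q1 * (1 - q2) * v2"
    using st'[of "(R2,True,False)"] by (simp add: sum_state dssc_trans_def bern_def ind_def dssc_next_def u2_def v2_def algebra_simps)
  have E8: "\<pi> (R2,False,False) = (1 - q1) * (1 - q2) * (v2 + u1)"
    using st'[of "(R2,False,False)"] by (simp add: sum_state dssc_trans_def bern_def ind_def dssc_next_def u1_def u2_def v2_def algebra_simps)
  have eu1: "u1 = q1 * (u1 + v1 + (1 - q2) * u2)"
  proof -
    have "u1 = \<pi> (R1,True,True) + \<pi> (R1,True,False)" by (simp add: u1_def)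
    also have "\<dots> = q1 * q2 * (u1 + v1) + q1 * (1 - q2) * (u1 + v1 + u2)" by (simp only: E1 E2)
    finally show ?thesis by (simp add: algebra_simps)
  qed
  have ev1: "v1 = (1 - q1) * (v1 + (1 - q2) * u2)"
  proof -
    have "v1 = \<pi> (R1,False,True) + \<pi> (R1,False,False)" by (simp add: v1_def)
    also have "\<dots> = (1 - q1) * q2 * v1 + (1 - q1) * (1 - q2) * (v1 + u2)" by (simp only: E3 E4)
    finally show ?thesis by (simp add: algebra_simps)
  qed
  have eu2: "u2 = q2 * (u2 + v2 + (1 - q1) * u1)"
  proof -
    have "u2 = \<pi> (R2,True,True) + \<pi> (R2,False,True)" by (simp add: u2_def)
    also have "\<dots> = q1 * q2 * (u2 + v2) + (1 - q1) * q2 * (u2 + v2 + u1)" by (simp only: E5 E6)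
    finally show ?thesis by (simp add: algebra_simps)
  qed
  have ev2: "v2 = (1 - q2) * (v2 + (1 - q1) * u1)"
  proof -
    have "v2 = \<pi> (R2,True,False) + \<pi> (R2,False,False)" by (simp add: v2_def)
    also have "\<dots> = q1 * (1 - q2) * v2 + (1 - q1) * (1 - q2) * (v2 + u1)" by (simp only: E7 E8)
    finally show ?thesis by (simp add: algebra_simps)
  qed
  have tot': "u1 + v1 + u2 + v2 = 1"
    using tot by (simp add: sum_state u1_def v1_def u2_def v2_def algebra_simps)
  have ch: "(u1 + v1) * (c1 * q1) + (u2 + v2) * (c2 * q2) =
     1 / (2 * a - a^2 + 2 * b - b^2 - 2 * (a * b) + a^2 * b + a * b^2 - 2) *
     (1 / (a * b) * (b^2 - b) * c1 + 1 / (a * b) * (a^2 - a) * c2 + (c1 + c2) * (a - 1) * (b - 1))"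
    by (rule chain_alg[OF a1 b1 q1_def q2_def eu1 ev1 eu2 ev2 tot'])
  have rate: "dssc_switching_rate \<Omega> F \<Gamma> T \<pi> = sqrt (2 * pi) * ((u1 + v1) * (c1 * q1) + (u2 + v2) * (c2 * q2))"
    unfolding dssc_switching_rate_def th_def[symmetric] UNIV_relay
    by (simp add: sum_bool2 L u1_def v1_def u2_def v2_def algebra_simps)
  have x1: "exp (2 * T / (\<Gamma> * O1)) = a^2" unfolding a_def
    by (simp add: exp_add[symmetric] power2_eq_square field_simps)
  have x2: "exp (2 * T / (\<Gamma> * O2)) = b^2" unfolding b_def
    by (simp add: exp_add[symmetric] power2_eq_square field_simps)
  have x3: "exp (T * (O1 + O2) / (\<Gamma> * O1 * O2)) = a * b" unfolding a_def b_def
    using O1 O2 G by (simp add: exp_add[symmetric] field_simps)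
  have x4: "exp (T * (O1 + 2 * O2) / (\<Gamma> * O1 * O2)) = a^2 * b" unfolding a_def b_def
    using O1 O2 G by (simp add: exp_add[symmetric] power2_eq_square field_simps)
  have x5: "exp (T * (2 * O1 + O2) / (\<Gamma> * O1 * O2)) = a * b^2" unfolding a_def b_def
    using O1 O2 G by (simp add: exp_add[symmetric] power2_eq_square field_simps)
  have x6: "exp (- (T * (O1 + O2) / (\<Gamma> * O1 * O2))) = 1 / (a * b)"
    using x3 by (simp add: exp_minus field_simps)
  show ?thesis
    unfolding Let_def O1_def[symmetric] O2_def[symmetric] c1_def[symmetric] c2_def[symmetric]
    unfolding x1 x2 x3 x4 x5 x6 a_def[symmetric] b_def[symmetric] rate ch
    by simp
qed


end
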